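(* Let $Q:P\to P$ be a linear operator with $\deg(Qp)=\deg p-1$ for every $p\in P$ (with the convention $\deg 0=-1$, so $Q$ annihilates constants). Write $Qx^n=\sum_{k=1}^{n}b_{n,k}x^{n-k}$ ($b_{n,k}\in\mathbf F$), so that $b_{n,1}\neq 0$ for all $n\ge1$, and assume $b_{1,1}=1$. Then there exist scalars $\{q_k\}_{k\ge2}\subset\mathbf F$ and an admissible sequence $\psi$ such that $$Q=\partial_\psi+\sum_{k\ge2}q_k\,\partial_\psi^{\,k}$$ (as operators on $P$; the sum is finite on each polynomial) if and only if there exists an admissible sequence $\psi$ such that $$b_{n,k}=\binom{n}{k}_{\psi}b_{k,k}\qquad\text{for all } n\ge k\ge 1 .$$ Moreover, if such $\{q_k\}_{k\ge2}$ and $\psi$ exist, they are unique.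
   Context: $\mathbf F$ is a field of characteristic zero and $P=\mathbf F[x]$. An admissible sequence is $\psi=(\psi_n)_{n\ge0}$ with $\psi_n\in\mathbf F$, $\psi_0=1$, $\psi_n\neq0$ for all $n$. Set $0_\psi=0$, $n_\psi=\psi_{n-1}/\psi_n$ for $n\ge1$, $n_\psi!=\psi_n^{-1}=n_\psi(n-1)_\psi\cdots1_\psi$ with $0_\psi!=1$, $n_\psi^{\underline k}=n_\psi(n-1)_\psi\cdots(n-k+1)_\psi$, and $\binom{n}{k}_\psi=n_\psi^{\underline k}/k_\psi!$. The $\psi$-derivative $\partial_\psi$ is the linear operator on $P$ with $\partial_\psi x^n=n_\psi x^{n-1}$ ($n\ge0$). *)

theory Defs
  imports "HOL-Computational_Algebra.Polynomial"
begin

definition admissible :: "(nat \<Rightarrow> 'a::field) \<Rightarrow> bool" where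
  "admissible \<psi> \<longleftrightarrow> \<psi> 0 = 1 \<and> (\<forall>n. \<psi> n \<noteq> 0)"

definition psi_num :: "(nat \<Rightarrow> 'a::field) \<Rightarrow> nat \<Rightarrow> 'a" where
  "psi_num \<psi> n = (if n = 0 then 0 else \<psi> (n - 1) / \<psi> n)"

definition psi_fact :: "(nat \<Rightarrow> 'a::field) \<Rightarrow> nat \<Rightarrow> 'a" where
  "psi_fact \<psi> n = inverse (\<psi> n)"

definition psi_falling :: "(nat \<Rightarrow> 'a::field) \<Rightarrow> nat \<Rightarrow> nat \<Rightarrow> 'a" where
  "psi_falling \<psi> n k = (\<Prod>i<k. psi_num \<psi> (n - i))"

definition psi_binom :: "(nat \<Rightarrow> 'a::field) \<Rightarrow> nat \<Rightarrow> nat \<Rightarrow> 'a" where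
  "psi_binom \<psi> n k = psi_falling \<psi> n k / psi_fact \<psi> k"

definition psi_deriv :: "(nat \<Rightarrow> 'a::field) \<Rightarrow> 'a poly \<Rightarrow> 'a poly" where
  "psi_deriv \<psi> p = (\<Sum>n\<le>degree p. monom (coeff p n * psi_num \<psi> n) (n - 1))"

definition deg :: "'a::zero poly \<Rightarrow> int" where
  "deg p = (if p = 0 then -1 else int (degree p))"

text \<open>Q = d_psi + sum_{k>=2} q_k d_psi^k on P (the sum is finite: terms with k > degree p vanish)\<close>
definition psi_series_rep :: "('a::field poly \<Rightarrow> 'a poly) \<Rightarrow> (nat \<Rightarrow> 'a) \<Rightarrow> (nat \<Rightarrow> 'a) \<Rightarrow> bool" where
  "psi_series_rep Q q \<psi> \<longleftrightarrow>
     (\<forall>p. Q p = psi_deriv \<psi> p + (\<Sum>k\<in>{2..degree p}. smult (q k) ((psi_deriv \<psi> ^^ k) p)))"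

end

theory Submission imports Defs begin

lemma coeff_psi_deriv:
  "coeff (psi_deriv \<psi> p) m = coeff p (Suc m) * psi_num \<psi> (Suc m)"
proof -
  have "coeff (psi_deriv \<psi> p) m = (\<Sum>n\<le>degree p. if n = Suc m then coeff p n * psi_num \<psi> n else 0)"
    unfolding psi_deriv_def coeff_sum coeff_monom
    by (rule sum.cong) (auto simp: psi_num_def)
  also have "\<dots> = coeff p (Suc m) * psi_num \<psi> (Suc m)"
    by (auto simp: coeff_eq_0)
  finally show ?thesis .
qed

lemma falling_Suc: "psi_falling \<psi> n (Suc k) = psi_falling \<psi> n k * psi_num \<psi> (n - k)"
  by (simp add: psi_falling_def)

lemma falling_Suc_Suc: "psi_falling \<psi> (Suc n) (Suc k) = psi_num \<psi> (Suc n) * psi_falling \<psi> n k"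
  unfolding psi_falling_def prod.lessThan_Suc_shift by simp

lemma falling_diag: "admissible \<psi> \<Longrightarrow> psi_falling \<psi> n n = inverse (\<psi> n)"
proof (induction n)
  case 0 then show ?case by (simp add: psi_falling_def admissible_def)
next
  case (Suc n)
  then show ?case by (simp add: falling_Suc_Suc psi_num_def admissible_def field_simps)
qed

lemma coeff_iter:
  "coeff ((psi_deriv \<psi> ^^ k) p) m = coeff p (m + k) * psi_falling \<psi> (m + k) k"
proof (induction k arbitrary: m)
  case 0 then show ?case by (simp add: psi_falling_def)
next
  case (Suc k)
  show ?case by (simp add: coeff_psi_deriv Suc falling_Suc)
qed

lemma rep_monom_coeff:
  assumes "psi_series_rep Q q \<psi>" "1 \<le> k" "k \<le> n"
  shows "coeff (Q (monom 1 n)) (n - k) = (if k = 1 then 1 else q k) * psi_falling \<psi> n k"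
proof -
  have Q: "Q (monom 1 n) = psi_deriv \<psi> (monom 1 n) + (\<Sum>j\<in>{2..n}. smult (q j) ((psi_deriv \<psi> ^^ j) (monom 1 n)))"
    using assms(1) unfolding psi_series_rep_def by (simp add: degree_monom_eq)
  have s: "(\<Sum>j\<in>{2..n}. q j * (coeff (monom 1 n) (n - k + j) * psi_falling \<psi> (n - k + j) j))
        = (\<Sum>j\<in>{2..n}. if j = k then q k * psi_falling \<psi> n k else 0)"
    by (rule sum.cong) (use assms in \<open>auto simp: coeff_monom\<close>)
  show ?thesis
    unfolding Q coeff_add coeff_sum coeff_smult coeff_iter coeff_psi_deriv s
    using assms by (auto simp: coeff_monom psi_falling_def)
qed

lemma falling_1: "psi_falling \<psi> n (Suc 0) = psi_num \<psi> n"
  by (simp add: psi_falling_def)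

lemma uniq:
  assumes a: "admissible \<psi>" "admissible \<psi>'" and r: "psi_series_rep Q q \<psi>" "psi_series_rep Q q' \<psi>'"
  shows "\<psi> = \<psi>' \<and> (\<forall>k\<ge>2. q k = q' k)"
proof -
  have num: "psi_num \<psi> n = psi_num \<psi>' n" for n
  proof (cases "n = 0")
    case True then show ?thesis by (simp add: psi_num_def)
  next
    case False
    then show ?thesis using rep_monom_coeff[OF r(1), of 1 n] rep_monom_coeff[OF r(2), of 1 n]
      by (simp add: falling_1)
  qed
  have eq: "\<psi> n = \<psi>' n" for n
  proof (induction n)
    case 0 then show ?case using a by (simp add: admissible_def)
  next
    case (Suc n)
    have "\<psi> n / \<psi> (Suc n) = \<psi>' n / \<psi>' (Suc n)" using num[of "Suc n"] by (simp add: psi_num_def)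
    then show ?case using Suc a by (auto simp: admissible_def field_simps)
  qed
  have "q k = q' k" if "k \<ge> 2" for k
  proof -
    have "q k * inverse (\<psi> k) = q' k * inverse (\<psi>' k)"
      using rep_monom_coeff[OF r(1), of k k] rep_monom_coeff[OF r(2), of k k] that
      falling_diag[OF a(1), of k] falling_diag[OF a(2), of k] by simp
    then show ?thesis using eq[of k] a by (auto simp: admissible_def)
  qed
  then show ?thesis using eq by auto
qed

lemma fwd:
  assumes a: "admissible \<psi>" and r: "psi_series_rep Q q \<psi>"
  shows "\<forall>n k. 1 \<le> k \<and> k \<le> n \<longrightarrow>
                coeff (Q (monom 1 n)) (n - k) = psi_binom \<psi> n k * coeff (Q (monom 1 k)) 0"
proof (intro allI impI)
  fix n k :: nat assume nk: "1 \<le> k \<and> k \<le> n"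
  have "coeff (Q (monom 1 k)) 0 = (if k = 1 then 1 else q k) * inverse (\<psi> k)"
    using rep_monom_coeff[OF r, of k k] nk falling_diag[OF a, of k] by simp
  then show "coeff (Q (monom 1 n)) (n - k) = psi_binom \<psi> n k * coeff (Q (monom 1 k)) 0"
    using rep_monom_coeff[OF r, of k n] nk a
    by (simp add: psi_binom_def psi_fact_def admissible_def field_simps)
qed

lemma Q_lin:
  fixes Q :: "'a::field poly \<Rightarrow> 'a poly"
  assumes add: "\<And>p r. Q (p + r) = Q p + Q r"
    and hom: "\<And>c p. Q (smult c p) = smult c (Q p)"
  shows "coeff (Q p) m = (\<Sum>n\<le>degree p. coeff p n * coeff (Q (monom 1 n)) m)"
proof -
  have Q0: "Q 0 = 0" using hom[of 0 0] by simp
  have sumQ: "Q (\<Sum>i\<in>A. f i) = (\<Sum>i\<in>A. Q (f i))" for A and f :: "nat \<Rightarrow> 'a poly"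
    by (induction A rule: infinite_finite_induct) (auto simp: Q0 add)
  have "Q p = Q (\<Sum>i\<le>degree p. smult (coeff p i) (monom 1 i))"
    by (simp add: smult_monom poly_as_sum_of_monoms)
  also have "\<dots> = (\<Sum>i\<le>degree p. smult (coeff p i) (Q (monom 1 i)))"
    by (simp add: sumQ hom)
  finally show ?thesis by (simp add: coeff_sum)
qed

lemma Q_monom_high:
  fixes Q :: "'a::field poly \<Rightarrow> 'a poly"
  assumes deg: "\<And>p. p \<noteq> 0 \<Longrightarrow> deg (Q p) = deg p - 1" and "n \<le> m"
  shows "coeff (Q (monom 1 n)) m = 0"
proof (cases "Q (monom 1 n) = 0")
  case False
  have "deg (Q (monom 1 n)) = int n - 1" using deg[of "monom 1 n"]
    by (simp add: deg_def degree_monom_eq)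
  then have "int (degree (Q (monom 1 n))) = int n - 1" using False by (simp add: deg_def)
  then show ?thesis using assms(2) by (intro coeff_eq_0) linarith
qed simp

lemma bwd_norm:
  fixes Q :: "'a::field poly \<Rightarrow> 'a poly"
  assumes add: "\<And>p r. Q (p + r) = Q p + Q r"
    and hom: "\<And>c p. Q (smult c p) = smult c (Q p)"
    and deg: "\<And>p. p \<noteq> 0 \<Longrightarrow> deg (Q p) = deg p - 1"
    and b11: "coeff (Q (monom 1 1)) 0 = 1"
    and a: "admissible \<phi>" and p1: "\<phi> 1 = 1"
    and C: "\<forall>n k. 1 \<le> k \<and> k \<le> n \<longrightarrow>
                coeff (Q (monom 1 n)) (n - k) = psi_binom \<phi> n k * coeff (Q (monom 1 k)) 0"
  shows "psi_series_rep Q (\<lambda>k. coeff (Q (monom 1 k)) 0 * \<phi> k) \<phi>"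
proof -
  define q where "q k = coeff (Q (monom 1 k)) 0 * \<phi> k" for k
  have q1: "q 1 = 1" using b11 p1 by (simp add: q_def)
  have nz: "\<phi> k \<noteq> 0" for k using a by (simp add: admissible_def)
  have Qm: "coeff (Q (monom 1 n)) m = (if m < n then q (n - m) * psi_falling \<phi> n (n - m) else 0)" for n m
  proof (cases "m < n")
    case True
    then have "coeff (Q (monom 1 n)) (n - (n - m)) = psi_binom \<phi> n (n - m) * coeff (Q (monom 1 (n - m))) 0"
      using spec[OF spec[OF C, of n], of "n - m"] True by simp
    moreover have "n - (n - m) = m" using True by simp
    ultimately show ?thesis using True
      by (simp add: q_def psi_binom_def psi_fact_def divide_inverse mult_ac)
  next
    case False then show ?thesis using Q_monom_high[OF deg] by simp
  qed
  show ?thesis unfolding psi_series_rep_def q_def[symmetric]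
  proof (intro allI poly_eqI)
    fix p :: "'a poly" and m
    define D where "D = degree p"
    define h where "h n = coeff p n * (if m < n then q (n - m) * psi_falling \<phi> n (n - m) else 0)" for n
    have L: "coeff (Q p) m = (\<Sum>n\<le>D. h n)"
      using Q_lin[OF add hom, of p m] by (simp add: D_def h_def Qm)
    have "(\<Sum>n\<le>D. h n) = (\<Sum>n\<le>m+D. h n)"
      by (rule sum.mono_neutral_left) (auto simp: h_def D_def coeff_eq_0)
    also have "\<dots> = (\<Sum>n\<in>(+) m ` {1..D}. h n)"
    proof (rule sum.mono_neutral_left[symmetric])
      show "\<forall>i\<in>{..m + D} - (+) m ` {1..D}. h i = 0"
      proof
        fix i assume i: "i \<in> {..m + D} - (+) m ` {1..D}"
        show "h i = 0"
        proof (cases "m < i")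
          case True
          then have "i = m + (i - m)" "i - m \<in> {1..D}" using i by auto
          then show ?thesis using i by blast
        qed (simp add: h_def)
      qed
    qed auto
    also have "\<dots> = (\<Sum>k\<in>{1..D}. h (m + k))"
      by (subst sum.reindex) auto
    also have "\<dots> = (\<Sum>k\<in>{1..D}. q k * (coeff p (m + k) * psi_falling \<phi> (m + k) k))"
      by (rule sum.cong) (auto simp: h_def)
    finally have L2: "coeff (Q p) m = \<dots>" using L by simp
    have R: "coeff (psi_deriv \<phi> p + (\<Sum>k = 2..degree p. smult (q k) ((psi_deriv \<phi> ^^ k) p))) m
       = coeff p (Suc m) * psi_num \<phi> (Suc m) + (\<Sum>k\<in>{2..D}. q k * (coeff p (m + k) * psi_falling \<phi> (m + k) k))"
      unfolding coeff_add coeff_sum coeff_smult coeff_iter coeff_psi_deriv D_def ..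
    show "coeff (Q p) m = coeff (psi_deriv \<phi> p + (\<Sum>k = 2..degree p. smult (q k) ((psi_deriv \<phi> ^^ k) p))) m"
    proof (cases "D = 0")
      case True
      then show ?thesis unfolding L2 R by (simp add: D_def coeff_eq_0)
    next
      case False
      then have "{1..D} = insert 1 {2..D}" by auto
      then show ?thesis unfolding L2 R using q1 by (simp add: falling_1)
    qed
  qed
qed


lemma rescale:
  assumes a: "admissible \<psi>"
    and C: "\<forall>n k. 1 \<le> k \<and> k \<le> n \<longrightarrow>
                coeff (Q (monom 1 n)) (n - k) = psi_binom \<psi> n k * coeff (Q (monom 1 k)) 0"
  shows "\<exists>\<phi>. admissible \<phi> \<and> \<phi> 1 = 1 \<and> (\<forall>n k. 1 \<le> k \<and> k \<le> n \<longrightarrow>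
                coeff (Q (monom 1 n)) (n - k) = psi_binom \<phi> n k * coeff (Q (monom 1 k)) 0)"
proof -
  define c where "c = \<psi> 1"
  define \<phi> where "\<phi> n = \<psi> n / c ^ n" for n
  have nz: "\<psi> n \<noteq> 0" for n using a by (simp add: admissible_def)
  have c0: "c \<noteq> 0" using nz by (simp add: c_def)
  have num: "psi_num \<phi> n = c * psi_num \<psi> n" for n
  proof (cases n)
    case (Suc k)
    then show ?thesis using c0 nz by (simp add: psi_num_def \<phi>_def field_simps)
  qed (simp add: psi_num_def)
  have fall: "psi_falling \<phi> n k = c ^ k * psi_falling \<psi> n k" for n k
    by (simp add: psi_falling_def num prod.distrib)
  have binom: "psi_binom \<phi> n k = psi_binom \<psi> n k" for n k
    using c0 nz[of k] by (simp add: psi_binom_def psi_fact_def fall \<phi>_def field_simps)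
  have "admissible \<phi>" using a c0 by (auto simp: admissible_def \<phi>_def)
  moreover have "\<phi> 1 = 1" using c0 by (simp add: \<phi>_def c_def)
  ultimately show ?thesis using C by (intro exI[of _ \<phi>]) (simp add: binom)
qed

theorem mainTheorem1:
  fixes Q :: "'a::field_char_0 poly \<Rightarrow> 'a poly"
  assumes add: "\<And>p r. Q (p + r) = Q p + Q r"
    and hom: "\<And>c p. Q (smult c p) = smult c (Q p)"
    and deg: "\<And>p. p \<noteq> 0 \<Longrightarrow> deg (Q p) = deg p - 1"
    and b11: "coeff (Q (monom 1 1)) 0 = 1"
  shows "((\<exists>q \<psi>. admissible \<psi> \<and> psi_series_rep Q q \<psi>) \<longleftrightarrow>
          (\<exists>\<psi>. admissible \<psi> \<and>
             (\<forall>n k. 1 \<le> k \<and> k \<le> n \<longrightarrow>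
                coeff (Q (monom 1 n)) (n - k) = psi_binom \<psi> n k * coeff (Q (monom 1 k)) 0)))
       \<and> (\<forall>q \<psi> q' \<psi>'. admissible \<psi> \<and> psi_series_rep Q q \<psi> \<and>
                        admissible \<psi>' \<and> psi_series_rep Q q' \<psi>' \<longrightarrow>
                        \<psi> = \<psi>' \<and> (\<forall>k\<ge>2. q k = q' k))"
proof (rule conjI[OF iffI])
  assume "\<exists>q \<psi>. admissible \<psi> \<and> psi_series_rep Q q \<psi>"
  then show "\<exists>\<psi>. admissible \<psi> \<and>
             (\<forall>n k. 1 \<le> k \<and> k \<le> n \<longrightarrow>
                coeff (Q (monom 1 n)) (n - k) = psi_binom \<psi> n k * coeff (Q (monom 1 k)) 0)"
    using fwd by blast
next
  assume "\<exists>\<psi>. admissible \<psi> \<and>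
             (\<forall>n k. 1 \<le> k \<and> k \<le> n \<longrightarrow>
                coeff (Q (monom 1 n)) (n - k) = psi_binom \<psi> n k * coeff (Q (monom 1 k)) 0)"
  then obtain \<psi> where "admissible \<psi>" "\<forall>n k. 1 \<le> k \<and> k \<le> n \<longrightarrow>
                coeff (Q (monom 1 n)) (n - k) = psi_binom \<psi> n k * coeff (Q (monom 1 k)) 0" by blast
  from rescale[OF this] obtain \<phi> where ph: "admissible \<phi>" "\<phi> 1 = 1" "\<forall>n k. 1 \<le> k \<and> k \<le> n \<longrightarrow>
                coeff (Q (monom 1 n)) (n - k) = psi_binom \<phi> n k * coeff (Q (monom 1 k)) 0" by blast
  show "\<exists>q \<psi>. admissible \<psi> \<and> psi_series_rep Q q \<psi>"
    using bwd_norm[OF add hom deg b11 ph] ph(1) by blast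
next
  show "\<forall>q \<psi> q' \<psi>'. admissible \<psi> \<and> psi_series_rep Q q \<psi> \<and>
                        admissible \<psi>' \<and> psi_series_rep Q q' \<psi>' \<longrightarrow>
                        \<psi> = \<psi>' \<and> (\<forall>k\<ge>2. q k = q' k)" using uniq by blast
qed

end
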